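(* Let $F$ be a perfect field of characteristic $p>0$. Let $m>l\ge2$ be integers with $\gcd(l,m)=1$, and let $f,g,h,g^*,h^*\in F[x]$ be monic and original with $\deg g=\deg h^*=m$, $\deg h=\deg g^*=l$ and $f=g\circ h=g^*\circ h^*$. (1) The following are equivalent: (a) $f\in F[x^p]$; (b) $f'=0$; (c) $g'(g^* )'=0$. (2) If $g'=0$, then $p\nmid l$ and $(g^* )'\ne0$, and there exist positive integers $j,M$ and monic original $G,G^*,H^*\in F[x]$ such that $m=p^jM$, $\deg G=\deg H^*=M$, $\deg G^*=l$, $g=x^{p^j}\circ G$, $g^*\circ x^{p^j}=x^{p^j}\circ G^*$, $h^*=x^{p^j}\circ H^*$, $G'(G^* )'\ne0$, $G\circ h=G^*\circ H^*$, and $f=x^{p^j}\circ G\circ h=x^{p^j}\circ(G^*\circ H^* )$. In particular, if $M>l$ then $(l,M,G,h,G^*,H^* )$ satisfies: $M>l\ge 2$, $\gcd(l,M)=1$, $\deg G=\deg H^*=M$, $\deg h=\deg G^*=l$, $G'(G^* )'\ne 0$, $G\circ h=G^*\circ H^*$; if $2\le M<l$ then $(M,l,G^*,H^*,G,h)$ satisfies the analogous conditions ($l>M\ge2$, $\gcd(M,l)=1$, $\deg G^*=\deg h=l$, $\deg H^*=\deg G=M$, $(G^* )'G'\ne0$, $G^*\circ H^*=G\circ h$). If $M=1$, then $G$ and $H^*$ are linear. (3) If $(g^* )'=0$, then $p\nmid m$ and $g'\ne0$, and there exist positive integers $e,L$ and monic original $G,H,G^*\in F[x]$ with $l=p^eL$,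 $p\nmid L$, $g=\varphi_e(G)$, $h=x^{p^e}\circ H$, $g^*=x^{p^e}\circ G^*$, $G'(G^* )'\ne0$, $G\circ H=G^*\circ h^*$, and $f=x^{p^e}\circ G\circ H$. In particular, if $L\ge2$ then $(L,m,G,H,G^*,h^* )$ satisfies: $m>L\ge2$, $\gcd(L,m)=1$, $\deg G=\deg h^*=m$, $\deg H=\deg G^*=L$, $G'(G^* )'\ne0$, $G\circ H=G^*\circ h^*$. (4) The data derived in (2) and (3) are uniquely determined. Conversely, given such data, the stated formulas yield $(l,m,g,h,g^*,h^* )$ and $f$ that satisfy the degree conditions, the relation $f=g\circ h=g^*\circ h^*$, and the monic-original conditions above.
   Context: $g\circ h=g(h)$; monic means leading coefficient 1; original means $f(0)=0$; $f'$ is the formal derivative. For $j\ge0$, $\varphi_j:F[x]\to F[x]$ is the map applying $a\mapsto a^{p^j}$ to every coefficient (and fixing $x$); it is an $\mathbb{F}_p$-linear bijection since $F$ is perfect. *)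

theory Defs
  imports "HOL-Computational_Algebra.Polynomial"
begin

definition perfect_char_p :: "'a::field itself \<Rightarrow> bool" where
  "perfect_char_p _ \<longleftrightarrow> CHAR('a) > 0 \<and> (\<forall>a::'a. \<exists>b. b ^ CHAR('a) = a)"

definition monic :: "'a::comm_ring_1 poly \<Rightarrow> bool" where
  "monic f \<longleftrightarrow> lead_coeff f = 1"

definition original :: "'a::comm_ring_1 poly \<Rightarrow> bool" where
  "original f \<longleftrightarrow> poly f 0 = 0"

definition in_Fxp :: "nat \<Rightarrow> 'a::comm_ring_1 poly \<Rightarrow> bool" where
  "in_Fxp p f \<longleftrightarrow> (\<exists>q. f = pcompose q (monom 1 p))"

definition phi :: "nat \<Rightarrow> nat \<Rightarrow> 'a::comm_ring_1 poly \<Rightarrow> 'a poly" where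
  "phi p j f = map_poly (\<lambda>a. a ^ (p ^ j)) f"

abbreviation xpow :: "nat \<Rightarrow> 'a::comm_ring_1 poly" where
  "xpow n \<equiv> monom 1 n"

definition data2 :: "nat \<Rightarrow> nat \<Rightarrow> nat \<Rightarrow> 'a::field poly \<Rightarrow> 'a poly \<Rightarrow> 'a poly \<Rightarrow> 'a poly \<Rightarrow> 'a poly
    \<Rightarrow> nat \<Rightarrow> nat \<Rightarrow> 'a poly \<Rightarrow> 'a poly \<Rightarrow> 'a poly \<Rightarrow> bool" where
  "data2 p l m f g h gs hs j M G Gs Hs \<longleftrightarrow>
     j > 0 \<and> M > 0 \<and>
     monic G \<and> original G \<and> monic Gs \<and> original Gs \<and> monic Hs \<and> original Hs \<and>
     m = p ^ j * M \<and> degree G = M \<and> degree Hs = M \<and> degree Gs = l \<and>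
     g = pcompose (xpow (p ^ j)) G \<and>
     pcompose gs (xpow (p ^ j)) = pcompose (xpow (p ^ j)) Gs \<and>
     hs = pcompose (xpow (p ^ j)) Hs \<and>
     pderiv G * pderiv Gs \<noteq> 0 \<and>
     pcompose G h = pcompose Gs Hs \<and>
     f = pcompose (xpow (p ^ j)) (pcompose G h) \<and>
     f = pcompose (xpow (p ^ j)) (pcompose Gs Hs)"

definition data3 :: "nat \<Rightarrow> nat \<Rightarrow> nat \<Rightarrow> 'a::field poly \<Rightarrow> 'a poly \<Rightarrow> 'a poly \<Rightarrow> 'a poly \<Rightarrow> 'a poly
    \<Rightarrow> nat \<Rightarrow> nat \<Rightarrow> 'a poly \<Rightarrow> 'a poly \<Rightarrow> 'a poly \<Rightarrow> bool" where
  "data3 p l m f g h gs hs e L G H Gs \<longleftrightarrow>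
     e > 0 \<and> L > 0 \<and>
     monic G \<and> original G \<and> monic H \<and> original H \<and> monic Gs \<and> original Gs \<and>
     l = p ^ e * L \<and> \<not> p dvd L \<and>
     g = phi p e G \<and>
     h = pcompose (xpow (p ^ e)) H \<and>
     gs = pcompose (xpow (p ^ e)) Gs \<and>
     pderiv G * pderiv Gs \<noteq> 0 \<and>
     pcompose G H = pcompose Gs hs \<and>
     f = pcompose (xpow (p ^ e)) (pcompose G H)"

end

theory Submission
  imports Defs "HOL-Computational_Algebra.Computational_Algebra"
begin


lemma xpow_comp: "pcompose (monom (1::'a::comm_semiring_1) n) Q = Q ^ n"
  by (induction n) (simp_all add: monom_Suc pcompose_pCons monom_0 pcompose_1 one_pCons)

lemma frob_poly:
  fixes P :: "'a::field poly"
  assumes "CHAR('a) > 0"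
  shows "P ^ (CHAR('a) ^ k) = pcompose (phi CHAR('a) k P) (monom 1 (CHAR('a) ^ k))"
proof (induction P)
  case 0
  then show ?case using assms by (simp add: phi_def)
next
  case (pCons a P)
  have pr: "prime CHAR('a poly)" using prime_CHAR_semidom assms by simp
  have "pCons a P = [:a:] + monom 1 1 * P"
    by (rule poly_eqI) (auto simp: coeff_monom_mult coeff_pCons split: nat.splits)
  hence "pCons a P ^ (CHAR('a) ^ k) = [:a:] ^ (CHAR('a) ^ k) + (monom 1 1 * P) ^ (CHAR('a) ^ k)"
    using freshmans_dream'[OF pr, of "CHAR('a) ^ k"] by simp
  also have "\<dots> = [:a ^ (CHAR('a) ^ k):] + monom 1 (CHAR('a) ^ k) * pcompose (phi CHAR('a) k P) (monom 1 (CHAR('a) ^ k))"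
    using pCons by (simp add: power_mult_distrib monom_power poly_const_pow)
  also have "\<dots> = pcompose (phi CHAR('a) k (pCons a P)) (monom 1 (CHAR('a) ^ k))"
    using assms by (simp add: phi_def map_poly_pCons pcompose_pCons)
  finally show ?case .
qed

lemma pow_inj:
  fixes x y :: "'b::idom"
  assumes "CHAR('b) > 0" "x ^ (CHAR('b) ^ k) = y ^ (CHAR('b) ^ k)"
  shows "x = y"
proof -
  have pr: "prime CHAR('b)" by (rule prime_CHAR_semidom) (rule assms(1))
  have "((x - y) + y) ^ (CHAR('b) ^ k) = (x - y) ^ (CHAR('b) ^ k) + y ^ (CHAR('b) ^ k)"
    using freshmans_dream'[OF pr, of "CHAR('b) ^ k" k "x - y" y] by simp
  hence "(x - y) ^ (CHAR('b) ^ k) = 0" using assms(2) by simp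
  thus ?thesis by simp
qed

lemma pow_inj_poly:
  fixes x y :: "'b::idom poly"
  assumes "CHAR('b) > 0" "x ^ (CHAR('b) ^ k) = y ^ (CHAR('b) ^ k)"
  shows "x = y"
  using pow_inj[of x k y] assms by simp

lemma phi_coeff:
  assumes "(c::nat) > 0"
  shows "coeff (phi c k (P::'a::field poly)) i = coeff P i ^ (c ^ k)"
  using assms by (simp add: phi_def coeff_map_poly)

lemma phi_degree:
  assumes "(c::nat) > 0"
  shows "degree (phi c k (P::'a::field poly)) = degree P"
  unfolding phi_def by (rule degree_map_poly) simp

lemma phi_lead:
  assumes "(c::nat) > 0"
  shows "lead_coeff (phi c k (P::'a::field poly)) = lead_coeff P ^ (c ^ k)"
  using assms by (simp add: phi_degree phi_coeff)

lemma phi_inj: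
  fixes P Q :: "'a::field poly"
  assumes "CHAR('a) > 0" "phi CHAR('a) k P = phi CHAR('a) k Q"
  shows "P = Q"
proof (rule poly_eqI)
  fix i
  have "coeff P i ^ (CHAR('a) ^ k) = coeff Q i ^ (CHAR('a) ^ k)"
    using arg_cong[OF assms(2), of "\<lambda>R. coeff R i"] assms(1) by (simp add: phi_coeff)
  thus "coeff P i = coeff Q i" using pow_inj assms(1) by blast
qed

lemma phi_phi:
  assumes "(c::nat) > 0"
  shows "phi c j (phi c k (P::'a::field poly)) = phi c (j + k) P"
  using assms by (intro poly_eqI) (simp add: phi_coeff power_add ac_simps flip: power_mult)

lemma of_nat_CHAR_pow: "k > 0 \<Longrightarrow> (of_nat (CHAR('b) ^ k) :: 'b::semiring_1) = 0"
  by (simp add: of_nat_eq_0_iff_char_dvd power_0_left)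

lemma pderiv_phi_zero:
  assumes "(c::nat) > 0"
  shows "pderiv (phi c k (P::'a::field poly)) = 0 \<longleftrightarrow> pderiv P = 0"
proof -
  have "coeff (pderiv (phi c k P)) i = 0 \<longleftrightarrow> coeff (pderiv P) i = 0" for i
    using assms by (simp add: coeff_pderiv phi_coeff)
  thus ?thesis by (metis poly_eqI coeff_0)
qed

lemma perfect_pow:
  assumes "\<forall>a::'a::field. \<exists>b. b ^ c = a"
  shows "\<exists>b. b ^ (c ^ k) = (a::'a)"
proof (induction k arbitrary: a)
  case 0 thus ?case by auto
next
  case (Suc k)
  obtain b where "b ^ (c ^ k) = a" using Suc by blast
  moreover obtain d where "d ^ c = b" using assms by blast
  ultimately show ?case by (metis power_mult power_Suc mult.commute)
qed

lemma phi_surj: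
  assumes "(c::nat) > 0" "\<forall>a::'a::field. \<exists>b. b ^ c = a"
  shows "\<exists>Q. (P::'a poly) = phi c k Q"
proof -
  define r where "r = (\<lambda>a::'a. SOME b. b ^ (c ^ k) = a)"
  have r: "r a ^ (c ^ k) = a" for a
    unfolding r_def using perfect_pow[OF assms(2)] by (metis (mono_tags) someI_ex)
  have r0: "r 0 = 0" using r[of 0] assms(1) by simp
  have "P = phi c k (map_poly r P)"
    using assms(1) by (intro poly_eqI) (simp add: phi_coeff coeff_map_poly r0 r)
  thus ?thesis by blast
qed

lemma pderiv_zero_iff:
  "pderiv (P::'a::field poly) = 0 \<longleftrightarrow> (\<forall>i. coeff P i \<noteq> 0 \<longrightarrow> CHAR('a) dvd i)"
proof
  assume h: "pderiv P = 0"
  show "\<forall>i. coeff P i \<noteq> 0 \<longrightarrow> CHAR('a) dvd i"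
  proof (intro allI impI)
    fix i assume "coeff P i \<noteq> 0"
    show "CHAR('a) dvd i"
    proof (cases i)
      case (Suc n)
      have "of_nat (Suc n) * coeff P (Suc n) = (0::'a)"
        using arg_cong[OF h, of "\<lambda>R. coeff R n"] by (simp add: coeff_pderiv)
      moreover have "coeff P (Suc n) \<noteq> 0" using Suc \<open>coeff P i \<noteq> 0\<close> by simp
      ultimately have "(of_nat (Suc n) :: 'a) = 0" by simp
      thus ?thesis using Suc by (simp only: of_nat_eq_0_iff_char_dvd)
    qed simp
  qed
next
  assume h: "\<forall>i. coeff P i \<noteq> 0 \<longrightarrow> CHAR('a) dvd i"
  show "pderiv P = 0"
  proof (rule poly_eqI)
    fix n
    show "coeff (pderiv P) n = coeff 0 n"
    proof (cases "coeff P (Suc n) = 0")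
      case True thus ?thesis by (simp add: coeff_pderiv)
    next
      case False
      hence "CHAR('a) dvd Suc n" using h by blast
      hence "(of_nat (Suc n) :: 'a) = 0" by (simp only: of_nat_eq_0_iff_char_dvd)
      thus ?thesis by (simp add: coeff_pderiv)
    qed
  qed
qed

lemma pderiv_zero_dvd_degree:
  "pderiv (P::'a::field poly) = 0 \<Longrightarrow> P \<noteq> 0 \<Longrightarrow> CHAR('a) dvd degree P"
  by (metis pderiv_zero_iff leading_coeff_0_iff)

lemma coeff_pcompose_xpow:
  assumes "n > 0"
  shows "coeff (pcompose Q (monom (1::'a::comm_semiring_1) n)) i = (if n dvd i then coeff Q (i div n) else 0)"
proof (induction Q arbitrary: i)
  case 0 thus ?case by simp
next
  case (pCons a Q)
  have "coeff (pcompose (pCons a Q) (monom 1 n)) i = coeff [:a:] i + (if i < n then 0 else coeff (pcompose Q (monom 1 n)) (i - n))"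
    by (simp add: pcompose_pCons coeff_monom_mult)
  also have "\<dots> = (if n dvd i then coeff (pCons a Q) (i div n) else 0)"
  proof (cases "i < n")
    case True
    thus ?thesis using assms by (cases "i = 0") (auto simp: coeff_pCons dest: dvd_imp_le split: nat.splits)
  next
    case False
    hence i: "i \<noteq> 0" using assms by auto
    have "n dvd (i - n) \<longleftrightarrow> n dvd i" using False by (simp add: dvd_minus_self)
    have D1: "(i - n) div n = i div n - 1" if dv: "n dvd i"
    proof -
      obtain q where q: "i = n * q" using dv by (auto elim: dvdE)
      have "i - n = n * (q - 1)" using q by (simp add: diff_mult_distrib2)
      thus ?thesis using q assms by simp
    qed
    have D2: "n dvd i \<Longrightarrow> i div n \<noteq> 0" using False assms by auto
    show ?thesis
    proof (cases "n dvd i")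
      case True
      have q: "i div n = Suc ((i - n) div n)" using D1[OF True] D2[OF True] by simp
      have "coeff [:a:] i = 0" using i by (simp add: coeff_pCons split: nat.split)
      thus ?thesis using True False pCons.IH[of "i - n"] \<open>n dvd (i - n) \<longleftrightarrow> n dvd i\<close> q by simp
    next
      case nd: False
      have "coeff [:a:] i = 0" using i by (simp add: coeff_pCons split: nat.split)
      thus ?thesis using nd False pCons.IH[of "i - n"] \<open>n dvd (i - n) \<longleftrightarrow> n dvd i\<close> by simp
    qed
  qed
  finally show ?case .
qed



lemma comp_pow: "pcompose (Q ^ n) R = (pcompose Q R) ^ n"
  by (induction n) (simp_all add: pcompose_mult pcompose_1)

lemma pderiv_xpow_zero: "(n::nat) > 0 \<Longrightarrow> pderiv (Q ^ (CHAR('a) ^ n) :: 'a::field poly) = 0"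
  by (simp add: pderiv_power of_nat_CHAR_pow)

lemma in_Fxp_iff:
  assumes "CHAR('a) > 0"
  shows "in_Fxp CHAR('a) (P::'a::field poly) \<longleftrightarrow> pderiv P = 0"
proof
  assume "in_Fxp CHAR('a) P"
  then obtain Q where "P = pcompose Q (monom 1 CHAR('a))" unfolding in_Fxp_def by blast
  thus "pderiv P = 0" by (simp add: pderiv_pcompose pderiv_monom)
next
  assume h: "pderiv P = 0"
  define c where "c = CHAR('a)"
  have c: "c > 0" using assms c_def by simp
  define Q where "Q = Poly (map (\<lambda>i. coeff P (i * c)) [0..<Suc (degree P)])"
  have "P = pcompose Q (monom 1 c)"
  proof (rule poly_eqI)
    fix i
    show "coeff P i = coeff (pcompose Q (monom 1 c)) i"
    proof (cases "c dvd i")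
      case True
      then obtain t where t: "i = t * c" by (metis dvd_def mult.commute)
      have "coeff Q t = coeff P i"
      proof (cases "t < Suc (degree P)")
        case True thus ?thesis unfolding Q_def by (simp add: nth_default_def t del: upt_Suc)
      next
        case False
        moreover have "t \<le> i" using t c by simp
        ultimately have "degree P < i" by linarith
        thus ?thesis unfolding Q_def using False by (simp add: nth_default_def coeff_eq_0)
      qed
      thus ?thesis using c True t by (simp add: coeff_pcompose_xpow)
    next
      case False
      thus ?thesis using h c c_def pderiv_zero_iff by (auto simp: coeff_pcompose_xpow)
    qed
  qed
  thus "in_Fxp CHAR('a) P" unfolding in_Fxp_def c_def by blast
qed

lemma phi_comp:
  assumes "CHAR('a) > 0"
  shows "pcompose (phi CHAR('a) k A) ((B::'a::field poly) ^ (CHAR('a) ^ k)) = (pcompose A B) ^ (CHAR('a) ^ k)"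
proof -
  have "pcompose (phi CHAR('a) k A) (B ^ (CHAR('a) ^ k))
      = pcompose (phi CHAR('a) k A) (pcompose (monom 1 (CHAR('a) ^ k)) B)" by (simp add: xpow_comp)
  also have "\<dots> = pcompose (A ^ (CHAR('a) ^ k)) B"
    by (simp add: pcompose_assoc frob_poly[OF assms])
  finally show ?thesis by (simp add: comp_pow)
qed

lemma pderiv_zero_root:
  assumes "CHAR('a) > 0" "\<forall>a::'a::field. \<exists>b. b ^ CHAR('a) = a" "pderiv (P::'a poly) = 0"
  shows "\<exists>Q. P = Q ^ CHAR('a)"
proof -
  obtain R where R: "P = pcompose R (monom 1 CHAR('a))"
    using in_Fxp_iff[OF assms(1)] assms(3) unfolding in_Fxp_def by blast
  obtain Q where "R = phi CHAR('a) 1 Q" using phi_surj[OF assms(1,2)] by blast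
  hence "P = Q ^ (CHAR('a) ^ 1)" using R frob_poly[OF assms(1), of Q 1] by simp
  thus ?thesis by auto
qed

lemma descent:
  assumes "CHAR('a) > 0" "\<forall>a::'a::field. \<exists>b. b ^ CHAR('a) = a" "degree (P::'a poly) > 0"
  shows "\<exists>k G. P = G ^ (CHAR('a) ^ k) \<and> pderiv G \<noteq> 0"
  using assms(3)
proof (induction "degree P" arbitrary: P rule: less_induct)
  case less
  show ?case
  proof (cases "pderiv P = 0")
    case False
    thus ?thesis by (intro exI[of _ 0] exI[of _ P]) simp
  next
    case True
    obtain Q where Q: "P = Q ^ CHAR('a)" using pderiv_zero_root[OF assms(1,2) True] by blast
    have c2: "CHAR('a) \<ge> 2" using prime_CHAR_semidom[OF assms(1)] prime_ge_2_nat by blast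
    have "Q \<noteq> 0" using Q less.prems assms(1) by (auto simp: power_0_left)
    hence dP: "degree P = CHAR('a) * degree Q" using Q by (simp add: degree_power_eq)
    hence "degree Q > 0" "degree Q < degree P" using less.prems c2 by auto
    then obtain k G where "Q = G ^ (CHAR('a) ^ k)" "pderiv G \<noteq> 0" using less.hyps by blast
    hence "P = G ^ (CHAR('a) ^ Suc k) \<and> pderiv G \<noteq> 0" using Q
      by (simp add: power_mult[symmetric] mult.commute)
    thus ?thesis by blast
  qed
qed

lemma step:
  assumes "CHAR('a) > 0" "\<forall>a::'a::field. \<exists>b. b ^ CHAR('a) = a"
    and "pcompose A B = (C::'a poly) ^ CHAR('a)" "pderiv A \<noteq> 0" "degree B > 0"
  shows "\<exists>A1 B1. B = B1 ^ CHAR('a) \<and> A = phi CHAR('a) 1 A1 \<and> pcompose A1 B1 = C \<and> pderiv A1 \<noteq> 0"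
proof -
  have "pderiv (C ^ (CHAR('a) ^ 1)) = 0" by (rule pderiv_xpow_zero) simp
  hence "pcompose (pderiv A) B * pderiv B = 0" using assms(3) by (simp add: pderiv_pcompose[symmetric])
  moreover have "pcompose (pderiv A) B \<noteq> 0" using assms(4,5) pcompose_eq_0 by blast
  ultimately have "pderiv B = 0" by simp
  then obtain B1 where B1: "B = B1 ^ CHAR('a)" using pderiv_zero_root[OF assms(1,2)] by blast
  obtain A1 where A1: "A = phi CHAR('a) 1 A1" using phi_surj[OF assms(1,2)] by blast
  have "(pcompose A1 B1) ^ (CHAR('a) ^ 1) = C ^ (CHAR('a) ^ 1)"
    using phi_comp[OF assms(1), of 1 A1 B1] A1 B1 assms(3) by simp
  hence "pcompose A1 B1 = C" using pow_inj_poly[of "pcompose A1 B1" 1 C] assms(1) by simp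
  moreover have "pderiv A1 \<noteq> 0" using A1 assms(1,4) pderiv_phi_zero by blast
  ultimately show ?thesis using A1 B1 by blast
qed

lemma iter:
  assumes "CHAR('a) > 0" "\<forall>a::'a::field. \<exists>b. b ^ CHAR('a) = a"
  shows "pcompose A B = (C::'a poly) ^ (CHAR('a) ^ k) \<Longrightarrow> pderiv A \<noteq> 0 \<Longrightarrow> degree B > 0 \<Longrightarrow>
     \<exists>A1 B1. B = B1 ^ (CHAR('a) ^ k) \<and> A = phi CHAR('a) k A1 \<and> pcompose A1 B1 = C \<and> pderiv A1 \<noteq> 0"
proof (induction k arbitrary: A B)
  case 0
  thus ?case using assms(1) by (intro exI[of _ A] exI[of _ B]) (simp add: phi_def)
next
  case (Suc k)
  have "pcompose A B = (C ^ (CHAR('a) ^ k)) ^ CHAR('a)"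
    using Suc.prems(1) by (simp add: power_mult[symmetric] mult.commute)
  then obtain A1 B1 where s: "B = B1 ^ CHAR('a)" "A = phi CHAR('a) 1 A1"
     "pcompose A1 B1 = C ^ (CHAR('a) ^ k)" "pderiv A1 \<noteq> 0"
    using step[OF assms] Suc.prems by blast
  have "B1 \<noteq> 0" using s(1) Suc.prems(3) assms(1) by (auto simp: power_0_left)
  hence "degree B1 > 0" using s(1) Suc.prems(3) by (simp add: degree_power_eq)
  then obtain A2 B2 where t: "B1 = B2 ^ (CHAR('a) ^ k)" "A1 = phi CHAR('a) k A2" "pcompose A2 B2 = C" "pderiv A2 \<noteq> 0"
    using Suc.IH s by blast
  have "B = B2 ^ (CHAR('a) ^ Suc k)" using s(1) t(1) by (simp add: power_mult[symmetric] mult.commute)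
  moreover have "A = phi CHAR('a) (Suc k) A2" using s(2) t(2) phi_phi[OF assms(1), of 1 k A2] by simp
  ultimately show ?case using t by blast
qed




lemma degree_pderiv_le': "degree (pderiv (P::'a::field poly)) \<le> degree P - 1"
  by (rule degree_le) (auto simp: coeff_pderiv coeff_eq_0)

lemma degree_pderiv_ndvd:
  assumes "\<not> CHAR('a) dvd degree (P::'a::field poly)" "degree P > 0"
  shows "degree (pderiv P) = degree P - 1"
proof (rule antisym[OF degree_pderiv_le'])
  have "P \<noteq> 0" using assms by auto
  have "coeff (pderiv P) (degree P - 1) = of_nat (degree P) * lead_coeff P"
    using assms(2) by (simp add: coeff_pderiv)
  also have "\<dots> \<noteq> 0" using assms \<open>P \<noteq> 0\<close> by (simp add: of_nat_eq_0_iff_char_dvd)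
  finally show "degree P - 1 \<le> degree (pderiv P)" by (rule le_degree)
qed

lemma pderiv_nz:
  "\<not> CHAR('a) dvd degree (P::'a::field poly) \<Longrightarrow> pderiv P \<noteq> 0"
  using pderiv_zero_dvd_degree by fastforce

lemma deg_arg:
  fixes G H Gs hs :: "'a::field poly"
  assumes c: "CHAR('a) > 0"
    and eq: "pcompose G H = pcompose Gs hs"
    and d: "degree G = m" "degree hs = m" "degree H = L" "degree Gs = L"
    and nm: "\<not> CHAR('a) dvd m" and Lm: "L < m" and Gs: "pderiv Gs \<noteq> 0" and L0: "0 < L"
  shows "\<not> CHAR('a) dvd L"
proof
  assume dv: "CHAR('a) dvd L"
  have m0: "m > 0" using Lm by simp
  have eq': "pcompose (pderiv G) H * pderiv H = pcompose (pderiv Gs) hs * pderiv hs"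
    using arg_cong[OF eq, of pderiv] by (simp add: pderiv_pcompose)
  have dhs: "degree (pderiv hs) = m - 1" using degree_pderiv_ndvd[of hs] d nm m0 by simp
  have dG: "degree (pderiv G) = m - 1" using degree_pderiv_ndvd[of G] d nm m0 by simp
  have hs': "pderiv hs \<noteq> 0" using pderiv_nz[of hs] d nm by simp
  have c1: "pcompose (pderiv Gs) hs \<noteq> 0" using pcompose_eq_0 Gs d m0 by fastforce
  define d' where "d' = degree (pderiv Gs)"
  define k where "k = degree (pderiv H)"
  have "pcompose (pderiv Gs) hs * pderiv hs \<noteq> 0" using c1 hs' by simp
  hence lhs: "pcompose (pderiv G) H \<noteq> 0" "pderiv H \<noteq> 0" using eq' by auto
  have "degree (pcompose (pderiv G) H * pderiv H) = (m - 1) * L + k"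
    using lhs by (simp add: degree_mult_eq degree_pcompose dG d k_def)
  moreover have "degree (pcompose (pderiv Gs) hs * pderiv hs) = d' * m + (m - 1)"
    using c1 hs' by (simp add: degree_mult_eq degree_pcompose dhs d d'_def)
  ultimately have E: "(m - 1) * L + k = d' * m + (m - 1)" using eq' by simp
  have kle: "k \<le> L - 1" using degree_pderiv_le'[of H] d k_def by simp
  have "coeff (pderiv H) (L - 1) = of_nat L * coeff H L" using L0 by (simp add: coeff_pderiv)
  also have "\<dots> = 0" using dv by (simp add: of_nat_eq_0_iff_char_dvd)
  finally have cz: "coeff (pderiv H) (L - 1) = 0" .
  have "k \<noteq> L - 1"
  proof
    assume "k = L - 1"
    hence "lead_coeff (pderiv H) = 0" using cz k_def by simp
    thus False using lhs(2) by simp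
  qed
  hence kl: "k + 1 < L" using kle L0 by linarith
  have Ei: "int m * (int L - int d' - 1) = int L - int k - 1"
  proof -
    have "int ((m - 1) * L + k) = int (d' * m + (m - 1))" using E by simp
    hence "(int m - 1) * int L + int k = int d' * int m + (int m - 1)" using m0 by (simp add: of_nat_diff)
    thus ?thesis by (simp add: algebra_simps)
  qed
  show False
  proof (cases "int L - int d' - 1 \<ge> 1")
    case True
    hence "int m * (int L - int d' - 1) \<ge> int m * 1" by (intro mult_left_mono) auto
    thus False using Ei kl Lm by linarith
  next
    case False
    hence "int L - int d' - 1 \<le> 0" by linarith
    hence "int m * (int L - int d' - 1) \<le> 0" by (simp add: mult_nonneg_nonpos)
    thus False using Ei kl by linarith
  qed
qed

lemma monic_pow:
  assumes "CHAR('a) > 0" "lead_coeff ((G::'a::field poly) ^ (CHAR('a) ^ k)) = 1"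
  shows "lead_coeff G = 1"
  using pow_inj[OF assms(1), of "lead_coeff G" k 1] assms(2) by (simp add: lead_coeff_power)

lemma orig_pow:
  assumes "CHAR('a) > 0" "poly ((G::'a::field poly) ^ (CHAR('a) ^ k)) 0 = 0"
  shows "poly G 0 = 0"
  using assms by simp

lemma monic_phi:
  assumes "CHAR('a) > 0"
  shows "lead_coeff (phi CHAR('a) k (G::'a::field poly)) = 1 \<longleftrightarrow> lead_coeff G = 1"
  using pow_inj[OF assms(1), of "lead_coeff G" k 1] assms by (auto simp: phi_lead)

lemma orig_phi:
  assumes "CHAR('a) > 0"
  shows "poly (phi CHAR('a) k (G::'a::field poly)) 0 = 0 \<longleftrightarrow> poly G 0 = 0"
  using assms by (simp add: poly_0_coeff_0 phi_coeff)




context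
  fixes f g h gs hs :: "'a::field poly" and l m :: nat
  assumes c: "CHAR('a) > 0" and perf: "\<forall>a::'a. \<exists>b. b ^ CHAR('a) = a"
    and lm: "m > l" "l \<ge> 2" "coprime l m"
    and mo: "monic f" "original f" "monic g" "original g" "monic h" "original h"
            "monic gs" "original gs" "monic hs" "original hs"
    and deg: "degree g = m" "degree hs = m" "degree h = l" "degree gs = l"
    and comp: "f = pcompose g h" "f = pcompose gs hs"
begin

lemma pr: "prime CHAR('a)" using prime_CHAR_semidom[OF c] .

lemma not_both: "\<not> (CHAR('a) dvd l \<and> CHAR('a) dvd m)"
proof
  assume "CHAR('a) dvd l \<and> CHAR('a) dvd m"
  thus False using coprime_common_divisor[OF lm(3)] pr not_prime_unit by blast
qed

lemma ne: "g \<noteq> 0" "h \<noteq> 0" "gs \<noteq> 0" "hs \<noteq> 0"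
  using deg lm by auto

lemma dv_of_deriv:
  "pderiv g = 0 \<Longrightarrow> CHAR('a) dvd m" "pderiv hs = 0 \<Longrightarrow> CHAR('a) dvd m"
  "pderiv h = 0 \<Longrightarrow> CHAR('a) dvd l" "pderiv gs = 0 \<Longrightarrow> CHAR('a) dvd l"
  using pderiv_zero_dvd_degree ne deg by metis+

lemma fd1: "pderiv f = pcompose (pderiv g) h * pderiv h"
  using comp(1) by (simp add: pderiv_pcompose)
lemma fd2: "pderiv f = pcompose (pderiv gs) hs * pderiv hs"
  using comp(2) by (simp add: pderiv_pcompose)

lemma part1: "(in_Fxp CHAR('a) f \<longleftrightarrow> pderiv f = 0) \<and> (pderiv f = 0 \<longleftrightarrow> pderiv g * pderiv gs = 0)"
proof (intro conjI)
  show "in_Fxp CHAR('a) f \<longleftrightarrow> pderiv f = 0" by (rule in_Fxp_iff[OF c])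
  show "pderiv f = 0 \<longleftrightarrow> pderiv g * pderiv gs = 0"
  proof
    assume f0: "pderiv f = 0"
    show "pderiv g * pderiv gs = 0"
    proof (rule ccontr)
      assume "pderiv g * pderiv gs \<noteq> 0"
      hence g1: "pderiv g \<noteq> 0" and g2: "pderiv gs \<noteq> 0" by auto
      have "pcompose (pderiv g) h \<noteq> 0" using g1 pcompose_eq_0 deg lm by fastforce
      hence "pderiv h = 0" using f0 fd1 by simp
      moreover have "pcompose (pderiv gs) hs \<noteq> 0" using g2 pcompose_eq_0 deg lm by fastforce
      hence "pderiv hs = 0" using f0 fd2 by simp
      ultimately show False using dv_of_deriv not_both by blast
    qed
  next
    assume "pderiv g * pderiv gs = 0"
    thus "pderiv f = 0" using fd1 fd2 by auto
  qed
qed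

lemma part2:
  assumes g0: "pderiv g = 0"
  shows "\<not> CHAR('a) dvd l \<and> pderiv gs \<noteq> 0 \<and>
      (\<exists>j M G Gs Hs. data2 CHAR('a) l m f g h gs hs j M G Gs Hs \<and>
         (M > l \<longrightarrow> M > l \<and> l \<ge> 2 \<and> coprime l M \<and> degree G = M \<and> degree Hs = M \<and>
             degree h = l \<and> degree Gs = l \<and> pderiv G * pderiv Gs \<noteq> 0 \<and>
             pcompose G h = pcompose Gs Hs) \<and>
         (2 \<le> M \<and> M < l \<longrightarrow> l > M \<and> M \<ge> 2 \<and> coprime M l \<and> degree Gs = l \<and> degree h = l \<and>
             degree Hs = M \<and> degree G = M \<and> pderiv Gs * pderiv G \<noteq> 0 \<and>
             pcompose Gs Hs = pcompose G h) \<and>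
         (M = 1 \<longrightarrow> degree G = 1 \<and> degree Hs = 1))"
proof -
  have nl: "\<not> CHAR('a) dvd l" using dv_of_deriv(1)[OF g0] not_both by blast
  have gs': "pderiv gs \<noteq> 0" using dv_of_deriv(4) nl by blast
  obtain j G where G: "g = G ^ (CHAR('a) ^ j)" "pderiv G \<noteq> 0"
    using descent[OF c perf, of g] deg lm by auto
  have j0: "j > 0" using G g0 by (cases j) auto
  have f1: "f = (pcompose G h) ^ (CHAR('a) ^ j)" using comp(1) G by (simp add: comp_pow)
  hence "pcompose gs hs = (pcompose G h) ^ (CHAR('a) ^ j)" using comp(2) by simp
  then obtain Gs Hs where GH: "hs = Hs ^ (CHAR('a) ^ j)" "gs = phi CHAR('a) j Gs"
      "pcompose Gs Hs = pcompose G h" "pderiv Gs \<noteq> 0"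
    using iter[OF c perf, of gs hs "pcompose G h" j] gs' deg lm by auto
  define M where "M = degree G"
  have Gne: "G \<noteq> 0" using G ne c by (auto simp: power_0_left)
  have Hsne: "Hs \<noteq> 0" using GH ne c by (auto simp: power_0_left)
  have mM: "m = CHAR('a) ^ j * M" using G deg Gne by (simp add: degree_power_eq M_def)
  have dHs: "degree Hs = M"
  proof -
    have "m = CHAR('a) ^ j * degree Hs" using GH deg Hsne by (simp add: degree_power_eq)
    thus ?thesis using mM c by simp
  qed
  have M0: "M > 0" using mM lm by (cases M) auto
  have dGs: "degree Gs = l" using GH deg phi_degree c by metis
  have moG: "monic G" "original G" using mo G monic_pow[OF c, of G j] c
    unfolding monic_def original_def by auto
  have moHs: "monic Hs" "original Hs" using mo GH monic_pow[OF c, of Hs j] c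
    unfolding monic_def original_def by auto
  have moGs: "monic Gs" "original Gs" using mo GH monic_phi[OF c] orig_phi[OF c]
    unfolding monic_def original_def by auto
  have gsx: "pcompose gs (xpow (CHAR('a) ^ j)) = pcompose (xpow (CHAR('a) ^ j)) Gs"
    using GH frob_poly[OF c, of Gs j] by (simp add: xpow_comp)
  have D: "data2 CHAR('a) l m f g h gs hs j M G Gs Hs"
    unfolding data2_def using j0 M0 moG moHs moGs mM M_def dHs dGs G GH gsx f1
    by (simp add: xpow_comp)
  have cop: "coprime l M" using lm(3) mM by (metis coprime_mult_right_iff)
  have i1: "M > l \<longrightarrow> M > l \<and> l \<ge> 2 \<and> coprime l M \<and> degree G = M \<and> degree Hs = M \<and>
             degree h = l \<and> degree Gs = l \<and> pderiv G * pderiv Gs \<noteq> 0 \<and>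
             pcompose G h = pcompose Gs Hs"
    using lm(2) cop dHs dGs M_def deg(3) G(2) GH(3,4) by simp
  have i2: "2 \<le> M \<and> M < l \<longrightarrow> l > M \<and> M \<ge> 2 \<and> coprime M l \<and> degree Gs = l \<and> degree h = l \<and>
             degree Hs = M \<and> degree G = M \<and> pderiv Gs * pderiv G \<noteq> 0 \<and>
             pcompose Gs Hs = pcompose G h"
    using cop dHs dGs M_def deg(3) G(2) GH(3,4) by (simp add: coprime_commute)
  have i3: "M = 1 \<longrightarrow> degree G = 1 \<and> degree Hs = 1" using dHs M_def by simp
  show ?thesis using nl gs' D i1 i2 i3 by blast
qed

lemma part3:
  assumes gs0: "pderiv gs = 0"
  shows "\<not> CHAR('a) dvd m \<and> pderiv g \<noteq> 0 \<and>
      (\<exists>e L G H Gs. data3 CHAR('a) l m f g h gs hs e L G H Gs \<and>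
         (L \<ge> 2 \<longrightarrow> m > L \<and> L \<ge> 2 \<and> coprime L m \<and> degree G = m \<and> degree hs = m \<and>
             degree H = L \<and> degree Gs = L \<and> pderiv G * pderiv Gs \<noteq> 0 \<and>
             pcompose G H = pcompose Gs hs))"
proof -
  have nm: "\<not> CHAR('a) dvd m" using dv_of_deriv(4)[OF gs0] not_both by blast
  have g': "pderiv g \<noteq> 0" using dv_of_deriv(1) nm by blast
  obtain e Gs where Gs: "gs = Gs ^ (CHAR('a) ^ e)" "pderiv Gs \<noteq> 0"
    using descent[OF c perf, of gs] deg lm by auto
  have e0: "e > 0" using Gs gs0 by (cases e) auto
  have f1: "f = (pcompose Gs hs) ^ (CHAR('a) ^ e)" using comp(2) Gs by (simp add: comp_pow)
  hence "pcompose g h = (pcompose Gs hs) ^ (CHAR('a) ^ e)" using comp(1) by simp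
  then obtain G H where GH: "h = H ^ (CHAR('a) ^ e)" "g = phi CHAR('a) e G"
      "pcompose G H = pcompose Gs hs" "pderiv G \<noteq> 0"
    using iter[OF c perf, of g h "pcompose Gs hs" e] g' deg lm by auto
  define L where "L = degree H"
  have Gsne: "Gs \<noteq> 0" using Gs ne c by (auto simp: power_0_left)
  have Hne: "H \<noteq> 0" using GH ne c by (auto simp: power_0_left)
  have lL: "l = CHAR('a) ^ e * L" using GH deg Hne by (simp add: degree_power_eq L_def)
  have dGs: "degree Gs = L"
  proof -
    have "l = CHAR('a) ^ e * degree Gs" using Gs deg Gsne by (simp add: degree_power_eq)
    thus ?thesis using lL c by simp
  qed
  have L0: "L > 0" using lL lm by (cases L) auto
  have dG: "degree G = m" using GH deg phi_degree c by metis
  have "L * 1 \<le> L * CHAR('a) ^ e" by (rule mult_le_mono2) (use c in simp)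
  hence "L \<le> l" using lL by (simp add: mult.commute)
  hence Llt: "L < m" using lm(1) by linarith
  have nL: "\<not> CHAR('a) dvd L"
    using deg_arg[OF c GH(3) dG deg(2) L_def[symmetric] dGs nm Llt Gs(2) L0] .
  have moH: "monic H" "original H" using mo GH monic_pow[OF c, of H e] c
    unfolding monic_def original_def by auto
  have moGs: "monic Gs" "original Gs" using mo Gs monic_pow[OF c, of Gs e] c
    unfolding monic_def original_def by auto
  have moG: "monic G" "original G" using mo GH monic_phi[OF c] orig_phi[OF c]
    unfolding monic_def original_def by auto
  have f2: "f = pcompose (xpow (CHAR('a) ^ e)) (pcompose G H)" using f1 GH by (simp add: xpow_comp)
  have D: "data3 CHAR('a) l m f g h gs hs e L G H Gs"
    unfolding data3_def using e0 L0 moG moH moGs lL nL GH Gs f2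
    by (simp add: xpow_comp)
  have cop: "coprime L m" using lm(3) lL by (metis coprime_mult_left_iff)
  have i1: "L \<ge> 2 \<longrightarrow> m > L \<and> L \<ge> 2 \<and> coprime L m \<and> degree G = m \<and> degree hs = m \<and>
             degree H = L \<and> degree Gs = L \<and> pderiv G * pderiv Gs \<noteq> 0 \<and>
             pcompose G H = pcompose Gs hs"
    using Llt cop dG deg(2) L_def dGs GH(3,4) Gs(2) by simp
  show ?thesis using nm g' D i1 by blast
qed

end



lemma pow_cancel_lemma:
  fixes G G' :: "'a::field poly"
  assumes c: "CHAR('a) > 0" and eq: "G ^ (CHAR('a) ^ j) = G' ^ (CHAR('a) ^ j')" and le: "j \<le> j'"
    and d: "pderiv G \<noteq> 0"
  shows "j = j' \<and> G = G'"
proof -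
  have e: "CHAR('a) ^ j' = CHAR('a) ^ (j' - j) * CHAR('a) ^ j"
    using le by (simp flip: power_add)
  have "G' ^ (CHAR('a) ^ j') = (G' ^ (CHAR('a) ^ (j' - j))) ^ (CHAR('a) ^ j)"
    by (simp only: e power_mult)
  hence "G = G' ^ (CHAR('a) ^ (j' - j))" using eq pow_inj_poly[OF c] by metis
  moreover have "j' - j = 0"
  proof (rule ccontr)
    assume "j' - j \<noteq> 0"
    hence "pderiv (G' ^ (CHAR('a) ^ (j' - j))) = 0" by (intro pderiv_xpow_zero) simp
    thus False using d calculation by simp
  qed
  ultimately show ?thesis using le by simp
qed

lemma pow_cancel:
  fixes G G' :: "'a::field poly"
  assumes c: "CHAR('a) > 0" and eq: "G ^ (CHAR('a) ^ j) = G' ^ (CHAR('a) ^ j')"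
    and d: "pderiv G \<noteq> 0" "pderiv G' \<noteq> 0"
  shows "j = j' \<and> G = G'"
proof (cases "j \<le> j'")
  case True thus ?thesis using pow_cancel_lemma[OF c eq] d by blast
next
  case False thus ?thesis using pow_cancel_lemma[OF c eq[symmetric]] d by simp
qed

lemma uniq2:
  fixes f g h gs hs G Gs Hs G' Gs' Hs' :: "'a::field poly"
  assumes c: "CHAR('a) > 0"
    and d1: "data2 CHAR('a) l m f g h gs hs j M G Gs Hs"
    and d2: "data2 CHAR('a) l m f g h gs hs j' M' G' Gs' Hs'"
  shows "j = j' \<and> M = M' \<and> G = G' \<and> Gs = Gs' \<and> Hs = Hs'"
proof -
  have "G ^ (CHAR('a) ^ j) = G' ^ (CHAR('a) ^ j')" "pderiv G \<noteq> 0" "pderiv G' \<noteq> 0"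
    using d1 d2 unfolding data2_def by (auto simp: xpow_comp)
  hence jj: "j = j'" and GG: "G = G'" using pow_cancel[OF c] by blast+
  have "Hs ^ (CHAR('a) ^ j) = Hs' ^ (CHAR('a) ^ j)" "Gs ^ (CHAR('a) ^ j) = Gs' ^ (CHAR('a) ^ j)"
    using d1 d2 jj unfolding data2_def by (auto simp: xpow_comp)
  hence "Hs = Hs'" "Gs = Gs'" using pow_inj_poly[OF c] by blast+
  moreover have "M = M'" using d1 d2 GG unfolding data2_def by auto
  ultimately show ?thesis using jj GG by blast
qed

lemma exp_uniq:
  assumes c: "(c::nat) > 1" and eq: "c ^ e * L = c ^ e' * L'" and n: "\<not> c dvd L" "\<not> c dvd L'" and le: "e \<le> e'"
  shows "e = e' \<and> L = L'"
proof -
  have e2: "c ^ e' = c ^ e * c ^ (e' - e)" using le by (simp flip: power_add)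
  have "c ^ e * L = c ^ e * (c ^ (e' - e) * L')" using eq by (simp only: e2 mult.assoc)
  hence L: "L = c ^ (e' - e) * L'" using c by simp
  have "e' - e = 0"
  proof (rule ccontr)
    assume "e' - e \<noteq> 0"
    hence "c dvd L" using L by (cases "e' - e") auto
    thus False using n by simp
  qed
  thus ?thesis using L le by simp
qed

lemma uniq3:
  fixes f g h gs hs G H Gs G' H' Gs' :: "'a::field poly"
  assumes c: "CHAR('a) > 0"
    and d1: "data3 CHAR('a) l m f g h gs hs e L G H Gs"
    and d2: "data3 CHAR('a) l m f g h gs hs e' L' G' H' Gs'"
  shows "e = e' \<and> L = L' \<and> G = G' \<and> H = H' \<and> Gs = Gs'"
proof -
  have c1: "CHAR('a) > 1" using prime_CHAR_semidom[OF c] prime_gt_1_nat by blast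
  have eq: "CHAR('a) ^ e * L = CHAR('a) ^ e' * L'" "\<not> CHAR('a) dvd L" "\<not> CHAR('a) dvd L'"
    using d1 d2 unfolding data3_def by auto
  have eL: "e = e' \<and> L = L'"
  proof (cases "e \<le> e'")
    case True thus ?thesis using exp_uniq[OF c1 eq(1) eq(2,3)] by blast
  next
    case False thus ?thesis using exp_uniq[OF c1 eq(1)[symmetric] eq(3,2)] by simp
  qed
  have "phi CHAR('a) e G = phi CHAR('a) e G'" using d1 d2 eL unfolding data3_def by auto
  hence "G = G'" using phi_inj[OF c] by blast
  moreover have "H ^ (CHAR('a) ^ e) = H' ^ (CHAR('a) ^ e)" "Gs ^ (CHAR('a) ^ e) = Gs' ^ (CHAR('a) ^ e)"
    using d1 d2 eL unfolding data3_def by (auto simp: xpow_comp)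
  hence "H = H'" "Gs = Gs'" using pow_inj_poly[OF c] by blast+
  ultimately show ?thesis using eL by blast
qed

lemma mo_deg:
  assumes "monic (P::'a::field poly)" "original P"
  shows "degree P > 0"
proof (rule ccontr)
  assume "\<not> degree P > 0"
  hence "degree P = 0" by simp
  hence "poly P 0 = lead_coeff P" by (simp add: poly_0_coeff_0)
  thus False using assms unfolding monic_def original_def by simp
qed

lemma conv2:
  fixes G Gs Hs h' :: "'a::field poly"
  assumes c: "CHAR('a) > 0"
    and A: "j > 0 \<and> M > 0 \<and> monic G \<and> original G \<and> monic Gs \<and> original Gs \<and>
      monic Hs \<and> original Hs \<and> monic h' \<and> original h' \<and>
      degree G = M \<and> degree Hs = M \<and> degree Gs = l' \<and> degree h' = l' \<and>
      pderiv G * pderiv Gs \<noteq> 0 \<and> pcompose G h' = pcompose Gs Hs"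
  shows "(let m' = CHAR('a) ^ j * M; g' = pcompose (xpow (CHAR('a) ^ j)) G; hs' = pcompose (xpow (CHAR('a) ^ j)) Hs;
           f' = pcompose (xpow (CHAR('a) ^ j)) (pcompose G h') in
       \<exists>gs'. monic gs' \<and> original gs' \<and> degree gs' = l' \<and>
         pcompose gs' (xpow (CHAR('a) ^ j)) = pcompose (xpow (CHAR('a) ^ j)) Gs \<and>
         monic g' \<and> original g' \<and> monic hs' \<and> original hs' \<and> monic f' \<and> original f' \<and>
         degree g' = m' \<and> degree hs' = m' \<and>
         f' = pcompose g' h' \<and> f' = pcompose gs' hs' \<and> pderiv g' = 0 \<and>
         data2 CHAR('a) l' m' f' g' h' gs' hs' j M G Gs Hs)"
proof -
  define n where "n = CHAR('a) ^ j"
  define gs' where "gs' = phi CHAR('a) j Gs"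
  have Gne: "G \<noteq> 0" "Hs \<noteq> 0" using A unfolding monic_def by auto
  have dh: "degree h' > 0" using A mo_deg by blast
  have gsx: "pcompose gs' (xpow n) = Gs ^ n"
    using frob_poly[OF c, of Gs j] unfolding gs'_def n_def by simp
  have f_eq: "(pcompose G h') ^ n = pcompose gs' (Hs ^ n)"
    using phi_comp[OF c, of j Gs Hs] A unfolding gs'_def n_def by simp
  have mgs: "monic gs'" "original gs'" "degree gs' = l'"
    using A monic_phi[OF c] orig_phi[OF c] phi_degree[OF c] unfolding gs'_def monic_def original_def by auto
  have lcomp: "lead_coeff (pcompose G h') = 1"
    proof -
    have m1: "lead_coeff G = 1" "lead_coeff h' = 1" using A unfolding monic_def by auto
    show ?thesis by (simp only: lead_coeff_comp[OF dh] m1 power_one mult_1)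
  qed
  have oc: "poly (pcompose G h') 0 = 0" using A unfolding original_def by (simp add: poly_pcompose)
  show ?thesis
    unfolding Let_def n_def[symmetric]
  proof (intro exI[of _ gs'] conjI)
    show "monic gs'" "original gs'" "degree gs' = l'" using mgs by auto
    show "pcompose gs' (xpow n) = pcompose (xpow n) Gs" using gsx by (simp add: xpow_comp)
    show "monic (pcompose (xpow n) G)" "original (pcompose (xpow n) G)"
      "monic (pcompose (xpow n) Hs)" "original (pcompose (xpow n) Hs)"
      "monic (pcompose (xpow n) (pcompose G h'))" "original (pcompose (xpow n) (pcompose G h'))"
      using A lcomp oc c unfolding monic_def original_def n_def
      by (auto simp: xpow_comp lead_coeff_power)
    show "degree (pcompose (xpow n) G) = n * M" "degree (pcompose (xpow n) Hs) = n * M"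
      using A Gne by (auto simp: xpow_comp degree_power_eq)
    show "pcompose (xpow n) (pcompose G h') = pcompose (pcompose (xpow n) G) h'"
      by (simp add: pcompose_assoc)
    show "pcompose (xpow n) (pcompose G h') = pcompose gs' (pcompose (xpow n) Hs)"
      using f_eq by (simp add: xpow_comp)
    show "pderiv (pcompose (xpow n) G) = 0" using A unfolding n_def
      by (simp add: xpow_comp pderiv_xpow_zero)
    show "data2 CHAR('a) l' (n * M) (pcompose (xpow n) (pcompose G h')) (pcompose (xpow n) G) h' gs'
          (pcompose (xpow n) Hs) j M G Gs Hs"
      unfolding data2_def n_def[symmetric] using A gsx f_eq
      by (simp add: xpow_comp pcompose_assoc)
  qed
qed

lemma conv3:
  fixes G H Gs hs' :: "'a::field poly"
  assumes c: "CHAR('a) > 0"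
    and A: "e > 0 \<and> L > 0 \<and> \<not> CHAR('a) dvd L \<and> monic G \<and> original G \<and> monic H \<and> original H \<and>
      monic Gs \<and> original Gs \<and> monic hs' \<and> original hs' \<and>
      degree G = m' \<and> degree hs' = m' \<and> degree H = L \<and> degree Gs = L \<and>
      pderiv G * pderiv Gs \<noteq> 0 \<and> pcompose G H = pcompose Gs hs'"
  shows "(let l' = CHAR('a) ^ e * L; g' = phi CHAR('a) e G; h' = pcompose (xpow (CHAR('a) ^ e)) H;
           gs' = pcompose (xpow (CHAR('a) ^ e)) Gs; f' = pcompose (xpow (CHAR('a) ^ e)) (pcompose G H) in
       monic g' \<and> original g' \<and> monic h' \<and> original h' \<and> monic gs' \<and> original gs' \<and>
       monic f' \<and> original f' \<and>
       degree g' = m' \<and> degree hs' = m' \<and> degree h' = l' \<and> degree gs' = l' \<and>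
       f' = pcompose g' h' \<and> f' = pcompose gs' hs' \<and> pderiv gs' = 0 \<and>
       data3 CHAR('a) l' m' f' g' h' gs' hs' e L G H Gs)"
proof -
  define n where "n = CHAR('a) ^ e"
  have Gne: "H \<noteq> 0" "Gs \<noteq> 0" using A unfolding monic_def by auto
  have f_eq: "pcompose (phi CHAR('a) e G) (H ^ n) = (pcompose G H) ^ n"
    using phi_comp[OF c, of e G H] unfolding n_def by simp
  have f_eq2: "pcompose (Gs ^ n) hs' = (pcompose G H) ^ n" using A by (simp add: comp_pow)
  have dh: "degree H > 0" using A mo_deg by blast
  have lcomp: "lead_coeff (pcompose G H) = 1"
    proof -
    have m1: "lead_coeff G = 1" "lead_coeff H = 1" using A unfolding monic_def by auto
    show ?thesis by (simp only: lead_coeff_comp[OF dh] m1 power_one mult_1)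
  qed
  have oc: "poly (pcompose G H) 0 = 0" using A unfolding original_def by (simp add: poly_pcompose)
  have mg: "monic (phi CHAR('a) e G)" "original (phi CHAR('a) e G)" "degree (phi CHAR('a) e G) = m'"
    using A monic_phi[OF c] orig_phi[OF c] phi_degree[OF c] unfolding monic_def original_def by auto
  show ?thesis
    unfolding Let_def n_def[symmetric]
  proof (intro conjI)
    show "monic (phi CHAR('a) e G)" "original (phi CHAR('a) e G)" "degree (phi CHAR('a) e G) = m'"
      using mg by auto
    show "monic (pcompose (xpow n) H)" "original (pcompose (xpow n) H)"
      "monic (pcompose (xpow n) Gs)" "original (pcompose (xpow n) Gs)"
      "monic (pcompose (xpow n) (pcompose G H))" "original (pcompose (xpow n) (pcompose G H))"
      using A lcomp oc c unfolding monic_def original_def n_def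
      by (auto simp: xpow_comp lead_coeff_power)
    show "degree hs' = m'" using A by simp
    show "degree (pcompose (xpow n) H) = n * L" "degree (pcompose (xpow n) Gs) = n * L"
      using A Gne by (auto simp: xpow_comp degree_power_eq)
    show "pcompose (xpow n) (pcompose G H) = pcompose (phi CHAR('a) e G) (pcompose (xpow n) H)"
      using f_eq by (simp add: xpow_comp)
    show "pcompose (xpow n) (pcompose G H) = pcompose (pcompose (xpow n) Gs) hs'"
      using f_eq2 by (simp add: xpow_comp)
    show "pderiv (pcompose (xpow n) Gs) = 0" using A unfolding n_def
      by (simp add: xpow_comp pderiv_xpow_zero)
    show "data3 CHAR('a) (n * L) m' (pcompose (xpow n) (pcompose G H)) (phi CHAR('a) e G)
          (pcompose (xpow n) H) (pcompose (xpow n) Gs) hs' e L G H Gs"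
      unfolding data3_def n_def[symmetric] using A by simp
  qed
qed


theorem lemma4p13:
  fixes f g h gs hs :: "'a::field poly" and p l m :: nat
  assumes perfect: "perfect_char_p TYPE('a)"
    and charp: "p = CHAR('a)"
    and lm: "m > l" "l \<ge> 2" "coprime l m"
    and mo: "monic f" "original f" "monic g" "original g" "monic h" "original h"
            "monic gs" "original gs" "monic hs" "original hs"
    and deg: "degree g = m" "degree hs = m" "degree h = l" "degree gs = l"
    and comp: "f = pcompose g h" "f = pcompose gs hs"
  shows
  \<comment> \<open>(1)\<close>
  "((in_Fxp p f \<longleftrightarrow> pderiv f = 0) \<and> (pderiv f = 0 \<longleftrightarrow> pderiv g * pderiv gs = 0))
   \<and>
  \<comment> \<open>(2)\<close>
   (pderiv g = 0 \<longrightarrow>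
      \<not> p dvd l \<and> pderiv gs \<noteq> 0 \<and>
      (\<exists>j M G Gs Hs. data2 p l m f g h gs hs j M G Gs Hs \<and>
         (M > l \<longrightarrow> M > l \<and> l \<ge> 2 \<and> coprime l M \<and> degree G = M \<and> degree Hs = M \<and>
             degree h = l \<and> degree Gs = l \<and> pderiv G * pderiv Gs \<noteq> 0 \<and>
             pcompose G h = pcompose Gs Hs) \<and>
         (2 \<le> M \<and> M < l \<longrightarrow> l > M \<and> M \<ge> 2 \<and> coprime M l \<and> degree Gs = l \<and> degree h = l \<and>
             degree Hs = M \<and> degree G = M \<and> pderiv Gs * pderiv G \<noteq> 0 \<and>
             pcompose Gs Hs = pcompose G h) \<and>
         (M = 1 \<longrightarrow> degree G = 1 \<and> degree Hs = 1)))
   \<and>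
  \<comment> \<open>(3)\<close>
   (pderiv gs = 0 \<longrightarrow>
      \<not> p dvd m \<and> pderiv g \<noteq> 0 \<and>
      (\<exists>e L G H Gs. data3 p l m f g h gs hs e L G H Gs \<and>
         (L \<ge> 2 \<longrightarrow> m > L \<and> L \<ge> 2 \<and> coprime L m \<and> degree G = m \<and> degree hs = m \<and>
             degree H = L \<and> degree Gs = L \<and> pderiv G * pderiv Gs \<noteq> 0 \<and>
             pcompose G H = pcompose Gs hs)))
   \<and>
  \<comment> \<open>(4) uniqueness of the data of (2) and (3)\<close>
   (\<forall>j M G Gs Hs j' M' G' Gs' Hs'.
      data2 p l m f g h gs hs j M G Gs Hs \<and> data2 p l m f g h gs hs j' M' G' Gs' Hs' \<longrightarrow>
      j = j' \<and> M = M' \<and> G = G' \<and> Gs = Gs' \<and> Hs = Hs')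
   \<and>
   (\<forall>e L G H Gs e' L' G' H' Gs'.
      data3 p l m f g h gs hs e L G H Gs \<and> data3 p l m f g h gs hs e' L' G' H' Gs' \<longrightarrow>
      e = e' \<and> L = L' \<and> G = G' \<and> H = H' \<and> Gs = Gs')
   \<and>
  \<comment> \<open>(4) converse for (2)\<close>
   (\<forall>(l'::nat) (j::nat) (M::nat) (G::'a poly) Gs Hs h'.
      j > 0 \<and> M > 0 \<and> monic G \<and> original G \<and> monic Gs \<and> original Gs \<and>
      monic Hs \<and> original Hs \<and> monic h' \<and> original h' \<and>
      degree G = M \<and> degree Hs = M \<and> degree Gs = l' \<and> degree h' = l' \<and>
      pderiv G * pderiv Gs \<noteq> 0 \<and> pcompose G h' = pcompose Gs Hs \<longrightarrow>
      (let m' = p ^ j * M; g' = pcompose (xpow (p ^ j)) G; hs' = pcompose (xpow (p ^ j)) Hs;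
           f' = pcompose (xpow (p ^ j)) (pcompose G h') in
       \<exists>gs'. monic gs' \<and> original gs' \<and> degree gs' = l' \<and>
         pcompose gs' (xpow (p ^ j)) = pcompose (xpow (p ^ j)) Gs \<and>
         monic g' \<and> original g' \<and> monic hs' \<and> original hs' \<and> monic f' \<and> original f' \<and>
         degree g' = m' \<and> degree hs' = m' \<and>
         f' = pcompose g' h' \<and> f' = pcompose gs' hs' \<and> pderiv g' = 0 \<and>
         data2 p l' m' f' g' h' gs' hs' j M G Gs Hs))
   \<and>
  \<comment> \<open>(4) converse for (3)\<close>
   (\<forall>(m'::nat) (e::nat) (L::nat) (G::'a poly) H Gs hs'.
      e > 0 \<and> L > 0 \<and> \<not> p dvd L \<and> monic G \<and> original G \<and> monic H \<and> original H \<and>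
      monic Gs \<and> original Gs \<and> monic hs' \<and> original hs' \<and>
      degree G = m' \<and> degree hs' = m' \<and> degree H = L \<and> degree Gs = L \<and>
      pderiv G * pderiv Gs \<noteq> 0 \<and> pcompose G H = pcompose Gs hs' \<longrightarrow>
      (let l' = p ^ e * L; g' = phi p e G; h' = pcompose (xpow (p ^ e)) H;
           gs' = pcompose (xpow (p ^ e)) Gs; f' = pcompose (xpow (p ^ e)) (pcompose G H) in
       monic g' \<and> original g' \<and> monic h' \<and> original h' \<and> monic gs' \<and> original gs' \<and>
       monic f' \<and> original f' \<and>
       degree g' = m' \<and> degree hs' = m' \<and> degree h' = l' \<and> degree gs' = l' \<and>
       f' = pcompose g' h' \<and> f' = pcompose gs' hs' \<and> pderiv gs' = 0 \<and>
       data3 p l' m' f' g' h' gs' hs' e L G H Gs))"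
  proof -
  have c: "CHAR('a) > 0" and perf: "\<forall>a::'a. \<exists>b. b ^ CHAR('a) = a"
    using perfect unfolding perfect_char_p_def by auto
  note P1 = part1[OF c perf lm mo deg comp]
  note P2 = part2[OF c perf lm mo deg comp]
  note P3 = part3[OF c perf lm mo deg comp]
  note U2 = uniq2[OF c]
  note U3 = uniq3[OF c]
  note C2 = conv2[OF c]
  note C3 = conv3[OF c]
  show ?thesis unfolding charp
    apply (rule conjI, rule P1)
    apply (rule conjI, use P2 in blast)
    apply (rule conjI, use P3 in blast)
    apply (rule conjI, use U2 in blast)
    apply (rule conjI, use U3 in blast)
    apply (rule conjI, use C2 in blast)
    using C3 by blast
qed

end
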